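(* $\deg_{\rm top}(R)=\deg_{\rm top}(\mathcal R)=8$.
   Context: The topological degree $\deg_{\rm top}$ of a rational map $\mathbb{CP}^2\dashrightarrow\mathbb{CP}^2$ is the number of preimages of a generic point. $R[U:V:W]=[(U^2+V^2)^2:V^2(U+W)^2:(V^2+W^2)^2]$ and $\mathcal R[Z:T:Y]=[Z^2(Z^2+T^2)^2:T^2(Z^2+Y^2)^2:(Z^2+T^2)(T^2Z^2+Y^4)]$ (in affine coordinates $z=Z/Y$, $t=T/Y$, $\mathcal R(z,t)=\big(\frac{z^2+t^2}{z^{-2}+t^2},\frac{z^2+z^{-2}+2}{z^2+z^{-2}+t^2+t^{-2}}\big)$). *)

theory Defs
  imports Complex_Main
begin

type_synonym pt3 = "complex \<times> complex \<times> complex"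

text \<open>Points of CP^2 are represented by nonzero vectors of C^3 up to nonzero scalars.\<close>

definition scale3 :: "complex \<Rightarrow> pt3 \<Rightarrow> pt3" where
  "scale3 c p = (case p of (x, y, z) \<Rightarrow> (c * x, c * y, c * z))"

definition proj_rel :: "(pt3 \<times> pt3) set" where
  "proj_rel = {(p, q). p \<noteq> (0,0,0) \<and> q \<noteq> (0,0,0) \<and> (\<exists>c. c \<noteq> 0 \<and> q = scale3 c p)}"

definition poly3 :: "(pt3 \<Rightarrow> complex) \<Rightarrow> bool" where
  "poly3 P \<longleftrightarrow> (\<exists>(c :: nat \<Rightarrow> nat \<Rightarrow> nat \<Rightarrow> complex) N.
      P = (\<lambda>(x, y, z). \<Sum>i\<le>N. \<Sum>j\<le>N. \<Sum>k\<le>N. c i j k * x ^ i * y ^ j * z ^ k))"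

definition num_preimages :: "(pt3 \<Rightarrow> pt3) \<Rightarrow> pt3 \<Rightarrow> nat" where
  "num_preimages F q =
     card ({p. p \<noteq> (0,0,0) \<and> F p \<noteq> (0,0,0) \<and> (F p, q) \<in> proj_rel} // proj_rel)"

text \<open>F has topological degree d: a generic point (outside the zero set of some nonzero
  polynomial, i.e. in a nonempty Zariski open set) has exactly d preimages.\<close>

definition has_top_degree :: "(pt3 \<Rightarrow> pt3) \<Rightarrow> nat \<Rightarrow> bool" where
  "has_top_degree F d \<longleftrightarrow>
     (\<exists>P. poly3 P \<and> P \<noteq> (\<lambda>_. 0) \<and>
        (\<forall>q. q \<noteq> (0,0,0) \<and> P q \<noteq> 0 \<longrightarrow> num_preimages F q = d))"

definition deg_top :: "(pt3 \<Rightarrow> pt3) \<Rightarrow> nat" where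
  "deg_top F = (THE d. has_top_degree F d)"

definition R_map :: "pt3 \<Rightarrow> pt3" where
  "R_map p = (case p of (U, V, W) \<Rightarrow>
     ((U^2 + V^2)^2, V^2 * (U + W)^2, (V^2 + W^2)^2))"

definition calR_map :: "pt3 \<Rightarrow> pt3" where
  "calR_map p = (case p of (Z, T, Y) \<Rightarrow>
     (Z^2 * (Z^2 + T^2)^2, T^2 * (Z^2 + Y^2)^2, (Z^2 + T^2) * (T^2 * Z^2 + Y^4)))"

end

theory Submission
  imports Defs "HOL-Computational_Algebra.Polynomial"
begin

definition mon :: "nat \<times> nat \<times> nat \<Rightarrow> pt3 \<Rightarrow> complex" where
  "mon m p = (case m of (i,j,k) \<Rightarrow> case p of (x,y,z) \<Rightarrow> x^i*y^j*z^k)"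

definition lpoly :: "(complex \<times> (nat \<times> nat \<times> nat)) list \<Rightarrow> pt3 \<Rightarrow> complex" where
  "lpoly L p = (\<Sum>(c,m)\<leftarrow>L. c * mon m p)"

lemma lpoly_Nil[simp]: "lpoly [] p = 0" by (simp add: lpoly_def)
lemma lpoly_Cons[simp]: "lpoly ((c,m)#L) p = c * mon m p + lpoly L p" by (simp add: lpoly_def)
lemma lpoly_append[simp]: "lpoly (L@L') p = lpoly L p + lpoly L' p"
  by (induction L) auto

definition madd :: "nat \<times> nat \<times> nat \<Rightarrow> nat \<times> nat \<times> nat \<Rightarrow> nat \<times> nat \<times> nat" where
  "madd m m' = (case m of (i,j,k) \<Rightarrow> case m' of (i',j',k') \<Rightarrow> (i+i',j+j',k+k'))"

lemma mon_madd: "mon (madd m m') p = mon m p * mon m' p"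
  by (cases m; cases m'; cases p) (simp add: mon_def madd_def power_add)

definition lmul where
  "lmul L L' = concat (map (\<lambda>(c,m). map (\<lambda>(d,m'). (c*d, madd m m')) L') L)"

lemma lpoly_map_mul: "lpoly (map (\<lambda>(d,m'). (c*d, madd m m')) L') p = c * mon m p * lpoly L' p"
  by (induction L') (auto simp: mon_madd algebra_simps)

lemma lpoly_lmul[simp]: "lpoly (lmul L L') p = lpoly L p * lpoly L' p"
proof (induction L)
  case Nil then show ?case by (simp add: lmul_def)
next
  case (Cons a L) then show ?case
    by (cases a) (simp add: lmul_def lpoly_map_mul algebra_simps)
qed

definition lconst :: "complex \<Rightarrow> _" where "lconst c = [(c,(0,0,0))]"
definition lX :: "(complex \<times> (nat \<times> nat \<times> nat)) list" where "lX = [(1,(1,0,0))]"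
definition lY :: "(complex \<times> (nat \<times> nat \<times> nat)) list" where "lY = [(1,(0,1,0))]"
definition lZ :: "(complex \<times> (nat \<times> nat \<times> nat)) list" where "lZ = [(1,(0,0,1))]"

lemma lpoly_basic[simp]: "lpoly (lconst c) p = c" "lpoly lX (x,y,z) = x" "lpoly lY (x,y,z) = y"
  "lpoly lZ (x,y,z) = z"
  by (simp_all add: lconst_def lX_def lY_def lZ_def mon_def)

definition coef :: "(complex \<times> (nat \<times> nat \<times> nat)) list \<Rightarrow> nat \<Rightarrow> nat \<Rightarrow> nat \<Rightarrow> complex" where
  "coef L i j k = (\<Sum>(c,m)\<leftarrow>L. if m = (i,j,k) then c else 0)"

lemma triple_delta:
  fixes x y z c :: complex
  assumes "a \<le> N" "b \<le> N" "e \<le> N"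
  shows "(\<Sum>i\<le>N. \<Sum>j\<le>N. \<Sum>k\<le>N. (if (a,b,e) = (i,j,k) then c else 0) * x^i*y^j*z^k)
     = c * x^a*y^b*z^e"
proof -
  have "(\<Sum>i\<le>N. \<Sum>j\<le>N. \<Sum>k\<le>N. (if (a,b,e) = (i,j,k) then c else 0) * x^i*y^j*z^k)
     = (\<Sum>i\<le>N. if i = a then (\<Sum>j\<le>N. if j = b then (\<Sum>k\<le>N. if k = e then c * x^i*y^j*z^k else 0) else 0) else 0)"
  proof -
    have eq: "\<And>i j k. (if (a,b,e) = (i,j,k) then c else 0) * x^i*y^j*z^k = (if i = a then (if j = b then (if k = e then c * x^i*y^j*z^k else 0) else 0) else 0)"
      by auto
    have sif: "\<And>P (f::nat\<Rightarrow>complex) S. (\<Sum>k\<in>S. if P then f k else 0) = (if P then sum f S else 0)" by auto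
    show ?thesis by (simp only: eq sif)
  qed
  also have "\<dots> = c * x^a*y^b*z^e" using assms by (simp add: sum.delta)
  finally show ?thesis .
qed

lemma lpoly_box:
  assumes "\<forall>(c,(i,j,k))\<in>set L. i \<le> N \<and> j \<le> N \<and> k \<le> N"
  shows "lpoly L (x,y,z) = (\<Sum>i\<le>N. \<Sum>j\<le>N. \<Sum>k\<le>N. coef L i j k * x^i*y^j*z^k)"
  using assms
proof (induction L)
  case Nil then show ?case by (simp add: coef_def)
next
  case (Cons a L)
  obtain c a1 a2 a3 where a: "a = (c,(a1,a2,a3))" by (cases a) auto
  have co: "coef (a#L) i j k = (if (a1,a2,a3) = (i,j,k) then c else 0) + coef L i j k" for i j k
    by (simp add: coef_def a)
  have "(\<Sum>i\<le>N. \<Sum>j\<le>N. \<Sum>k\<le>N. coef (a#L) i j k * x^i*y^j*z^k)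
    = (\<Sum>i\<le>N. \<Sum>j\<le>N. \<Sum>k\<le>N. (if (a1,a2,a3) = (i,j,k) then c else 0) * x^i*y^j*z^k)
      + (\<Sum>i\<le>N. \<Sum>j\<le>N. \<Sum>k\<le>N. coef L i j k * x^i*y^j*z^k)"
    unfolding co by (simp add: sum.distrib distrib_right)
  also have "\<dots> = c * x^a1*y^a2*z^a3 + lpoly L (x,y,z)"
    using Cons by (subst triple_delta) (auto simp: a)
  finally show ?case by (simp add: a mon_def)
qed

lemma poly3_lpoly: "poly3 (lpoly L)"
proof -
  define N where "N = (\<Sum>(c,(i,j,k))\<leftarrow>L. i+j+k)"
  have "\<forall>(c,(i,j,k))\<in>set L. i \<le> N \<and> j \<le> N \<and> k \<le> N"
  proof -
    have "\<forall>(c,(i,j,k))\<in>set L. i + j + k \<le> (\<Sum>(c,(i,j,k))\<leftarrow>L. i+j+k)"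
    proof (induction L)
      case Nil then show ?case by simp
    next
      case (Cons a L) then show ?case by (cases a) auto
    qed
    then show ?thesis unfolding N_def by fastforce
  qed
  then have "lpoly L = (\<lambda>(x,y,z). \<Sum>i\<le>N. \<Sum>j\<le>N. \<Sum>k\<le>N. coef L i j k * x^i*y^j*z^k)"
    using lpoly_box by (auto simp: fun_eq_iff)
  then show ?thesis unfolding poly3_def by blast
qed

lemma poly3_line:
  assumes "poly3 P"
  shows "\<exists>pp. \<forall>t. P (a1 + t*(b1-a1), a2 + t*(b2-a2), a3 + t*(b3-a3)) = poly pp t"
proof -
  obtain c N where P: "P = (\<lambda>(x, y, z). \<Sum>i\<le>N. \<Sum>j\<le>N. \<Sum>k\<le>N. c i j k * x ^ i * y ^ j * z ^ k)"
    using assms unfolding poly3_def by blast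
  define pp where "pp = (\<Sum>i\<le>N. \<Sum>j\<le>N. \<Sum>k\<le>N. smult (c i j k) ([:a1, b1-a1:]^i * [:a2, b2-a2:]^j * [:a3,b3-a3:]^k))"
  have "P (a1 + t*(b1-a1), a2 + t*(b2-a2), a3 + t*(b3-a3)) = poly pp t" for t
    unfolding P pp_def by (simp add: poly_sum poly_power algebra_simps)
  then show ?thesis by blast
qed

lemma poly3_common_nonzero:
  assumes "poly3 P" "poly3 Q" "P a \<noteq> 0" "Q b \<noteq> 0"
  shows "\<exists>q. P q \<noteq> 0 \<and> Q q \<noteq> 0"
proof -
  obtain a1 a2 a3 where a: "a = (a1,a2,a3)" by (cases a) auto
  obtain b1 b2 b3 where b: "b = (b1,b2,b3)" by (cases b) auto
  define l where "l t = (a1 + t*(b1-a1), a2 + t*(b2-a2), a3 + t*(b3-a3))" for t :: complex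
  obtain pp where pp: "\<And>t. P (l t) = poly pp t"
    using poly3_line[OF assms(1), of a1 b1 a2 b2 a3 b3] unfolding l_def by blast
  obtain qq where qq: "\<And>t. Q (l t) = poly qq t"
    using poly3_line[OF assms(2), of a1 b1 a2 b2 a3 b3] unfolding l_def by blast
  have l0: "l 0 = a" and l1: "l 1 = b" by (simp_all add: l_def a b)
  have "pp \<noteq> 0" using pp[of 0] l0 assms(3) by auto
  then have f1: "finite {t. poly pp t = 0}" by (rule poly_roots_finite)
  have "qq \<noteq> 0" using qq[of 1] l1 assms(4) by auto
  then have f2: "finite {t. poly qq t = 0}" by (rule poly_roots_finite)
  have "infinite (UNIV :: complex set)" by (rule infinite_UNIV_char_0)
  then have "UNIV - ({t. poly pp t = 0} \<union> {t. poly qq t = 0}) \<noteq> {}"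
    using f1 f2 by (metis Diff_empty Diff_eq_empty_iff finite_Un finite_subset)
  then obtain t where "poly pp t \<noteq> 0" "poly qq t \<noteq> 0" by blast
  then show ?thesis using pp qq by metis
qed

lemma deg_top_eq:
  assumes "poly3 P" "P (0,0,0) = 0" "P q0 \<noteq> 0"
    and "\<forall>q. q \<noteq> (0,0,0) \<and> P q \<noteq> 0 \<longrightarrow> num_preimages F q = d"
  shows "deg_top F = d"
  unfolding deg_top_def
proof (rule the_equality)
  have "P \<noteq> (\<lambda>_. 0)" using assms(3) by auto
  then show "has_top_degree F d" using assms unfolding has_top_degree_def by blast
next
  fix d' assume "has_top_degree F d'"
  then obtain Q where Q: "poly3 Q" "Q \<noteq> (\<lambda>_. 0)" "\<forall>q. q \<noteq> (0,0,0) \<and> Q q \<noteq> 0 \<longrightarrow> num_preimages F q = d'"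
    unfolding has_top_degree_def by blast
  obtain b where "Q b \<noteq> 0" using Q(2) by (meson ext)
  then obtain q where q: "P q \<noteq> 0" "Q q \<noteq> 0" using poly3_common_nonzero[OF assms(1) Q(1) assms(3)] by blast
  have "q \<noteq> (0,0,0)" using q assms(2) by auto
  then show "d' = d" using q Q(3) assms(4) by metis
qed

lemma scale3_scale3[simp]: "scale3 c (scale3 d p) = scale3 (c*d) p"
  by (cases p) (simp add: scale3_def)
lemma scale3_1[simp]: "scale3 1 p = p"
  by (cases p) (simp add: scale3_def)
lemma scale3_eq0: "scale3 c p = (0,0,0) \<longleftrightarrow> c = 0 \<or> p = (0,0,0)"
  by (cases p) (auto simp: scale3_def)

lemma proj_rel_sym: "(p,q) \<in> proj_rel \<Longrightarrow> (q,p) \<in> proj_rel"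
  unfolding proj_rel_def
proof (clarify)
  fix c assume "p \<noteq> (0,0,0)" "scale3 c p \<noteq> (0,0,0)" "c \<noteq> 0"
  then show "\<exists>d. d \<noteq> 0 \<and> p = scale3 d (scale3 c p)"
    by (intro exI[of _ "1/c"]) simp
qed

lemma proj_rel_trans: "(p,q) \<in> proj_rel \<Longrightarrow> (q,r) \<in> proj_rel \<Longrightarrow> (p,r) \<in> proj_rel"
  unfolding proj_rel_def by clarsimp (metis mult_eq_0_iff)

lemma proj_rel_refl: "p \<noteq> (0,0,0) \<Longrightarrow> (p,p) \<in> proj_rel"
  unfolding proj_rel_def by (auto intro: exI[of _ 1])

lemma proj_rel_scale: "p \<noteq> (0,0,0) \<Longrightarrow> c \<noteq> 0 \<Longrightarrow> (p, scale3 c p) \<in> proj_rel"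
  unfolding proj_rel_def by (auto simp: scale3_eq0)

lemma count_lemma:
  fixes F :: "pt3 \<Rightarrow> pt3" and g :: "'i \<Rightarrow> pt3" and q :: pt3
  defines "A \<equiv> {p. p \<noteq> (0,0,0) \<and> F p \<noteq> (0,0,0) \<and> (F p, q) \<in> proj_rel}"
  assumes fin: "finite I" and mem: "\<And>i. i \<in> I \<Longrightarrow> g i \<in> A"
    and inj: "\<And>i j. i \<in> I \<Longrightarrow> j \<in> I \<Longrightarrow> (g i, g j) \<in> proj_rel \<Longrightarrow> i = j"
    and cover: "\<And>p. p \<in> A \<Longrightarrow> \<exists>i\<in>I. (p, g i) \<in> proj_rel"
  shows "num_preimages F q = card I"
proof -
  have cls: "proj_rel``{p} = proj_rel``{p'}" if "(p,p') \<in> proj_rel" for p p'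
    using that proj_rel_sym proj_rel_trans by blast
  have eq: "A // proj_rel = (\<lambda>i. proj_rel``{g i}) ` I"
  proof
    show "A // proj_rel \<subseteq> (\<lambda>i. proj_rel``{g i}) ` I"
      unfolding quotient_def using cover cls by blast
    show "(\<lambda>i. proj_rel``{g i}) ` I \<subseteq> A // proj_rel"
      unfolding quotient_def using mem by blast
  qed
  have "inj_on (\<lambda>i. proj_rel``{g i}) I"
  proof (rule inj_onI)
    fix i j assume ij: "i \<in> I" "j \<in> I" "proj_rel``{g i} = proj_rel``{g j}"
    have "g j \<noteq> (0,0,0)" using mem[OF ij(2)] unfolding A_def by blast
    then have "g j \<in> proj_rel``{g j}" using proj_rel_refl by blast
    then have "(g i, g j) \<in> proj_rel" using ij(3) by blast
    then show "i = j" using inj ij by blast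
  qed
  then have "card (A // proj_rel) = card I" unfolding eq by (rule card_image)
  then show ?thesis unfolding num_preimages_def A_def .
qed

definition sg :: "bool \<Rightarrow> complex" where "sg b = (if b then 1 else -1)"
lemma sg_sq[simp]: "sg b * sg b = 1" "(sg b)^2 = 1" by (auto simp: sg_def power2_eq_square)
lemma sg_nz[simp]: "sg b \<noteq> 0" by (auto simp: sg_def)

definition phi :: "pt3 \<Rightarrow> pt3" where
  "phi p = (case p of (U,V,W) \<Rightarrow> (U^2+V^2, V*(U+W), V^2+W^2))"

lemma R_phi: "R_map p = (case phi p of (a,b,c) \<Rightarrow> (a^2,b^2,c^2))"
  by (cases p) (simp add: R_map_def phi_def power_mult_distrib)

lemma phi_scale: "phi (scale3 k p) = scale3 (k^2) (phi p)"
  by (cases p) (simp add: phi_def scale3_def algebra_simps power2_eq_square)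

definition Tv :: "complex \<Rightarrow> complex \<Rightarrow> complex \<Rightarrow> bool \<Rightarrow> complex" where
  "Tv a b c d = a + c + 2 * sg d * csqrt (a*c - b^2)"

definition Rpt :: "complex \<Rightarrow> complex \<Rightarrow> complex \<Rightarrow> bool \<Rightarrow> pt3" where
  "Rpt a b c d = (let S = csqrt (Tv a b c d) in ((S + (a-c)/S)/2, b/S, (S - (a-c)/S)/2))"

lemma Tv_nz:
  assumes "(a-c)^2 + 4*b^2 \<noteq> 0" shows "Tv a b c d \<noteq> 0"
proof
  assume "Tv a b c d = 0"
  then have "a + c = - 2 * sg d * csqrt (a*c - b^2)" by (simp add: Tv_def add_eq_0_iff)
  then have "(a+c)^2 = 4 * (sg d)^2 * (csqrt (a*c - b^2))^2" by (simp add: power_mult_distrib)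
  then have "(a+c)^2 = 4 * (a*c - b^2)" by simp
  then have "(a-c)^2 + 4*b^2 = 0" by (simp add: power2_eq_square algebra_simps)
  then show False using assms by simp
qed

lemma phi_Rpt:
  assumes "(a-c)^2 + 4*b^2 \<noteq> 0"
  shows "phi (Rpt a b c d) = (a,b,c)"
proof -
  define r where "r = csqrt (a*c - b^2)"
  define T where "T = Tv a b c d"
  define S where "S = csqrt T"
  have r2: "r^2 = a*c - b^2" by (simp add: r_def)
  have T: "T = a + c + 2 * sg d * r" by (simp add: T_def Tv_def r_def)
  have S2: "S^2 = T" by (simp add: S_def)
  have "T \<noteq> 0" using Tv_nz[OF assms] by (simp add: T_def)
  then have S0: "S \<noteq> 0" using S2 by auto
  have key: "T^2 - 2*(a+c)*T + (a-c)^2 + 4*b^2 = 0"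
  proof -
    have "T^2 - 2*(a+c)*T + (a-c)^2 + 4*b^2 = (sg d)^2 * 4 * r^2 - 4*(a*c - b^2)"
      unfolding T by (simp add: power2_eq_square algebra_simps)
    then show ?thesis using r2 by simp
  qed
  have key': "S^2*S^2 - 2*(a+c)*S^2 + (a-c)^2 + 4*b^2 = 0" using key S2 by (simp add: power2_eq_square)
  have e1: "((S + (a-c)/S)/2)^2 + (b/S)^2 = a"
  proof -
    have "((S + (a-c)/S)/2)^2 + (b/S)^2 = (S^2*S^2 + 2*(a-c)*S^2 + (a-c)^2 + 4*b^2)/(4*S^2)"
      using S0 by (simp add: field_simps power2_eq_square)
    also have "\<dots> = (4*a*S^2)/(4*S^2)"
    proof -
      have "S^2*S^2 + 2*(a-c)*S^2 + (a-c)^2 + 4*b^2 = (S^2*S^2 - 2*(a+c)*S^2 + (a-c)^2 + 4*b^2) + 4*a*S^2"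
        by (simp add: algebra_simps)
      then show ?thesis unfolding key' by simp
    qed
    finally show ?thesis using S0 by simp
  qed
  have e3: "(b/S)^2 + ((S - (a-c)/S)/2)^2 = c"
  proof -
    have "(b/S)^2 + ((S - (a-c)/S)/2)^2 = (S^2*S^2 - 2*(a-c)*S^2 + (a-c)^2 + 4*b^2)/(4*S^2)"
      using S0 by (simp add: field_simps power2_eq_square)
    also have "\<dots> = (4*c*S^2)/(4*S^2)"
    proof -
      have "S^2*S^2 - 2*(a-c)*S^2 + (a-c)^2 + 4*b^2 = (S^2*S^2 - 2*(a+c)*S^2 + (a-c)^2 + 4*b^2) + 4*c*S^2"
        by (simp add: algebra_simps)
      then show ?thesis unfolding key' by simp
    qed
    finally show ?thesis using S0 by simp
  qed
  have e2: "b/S * ((S + (a-c)/S)/2 + (S - (a-c)/S)/2) = b" using S0 by (simp add: field_simps)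
  show ?thesis using e1 e2 e3
    by (simp add: Rpt_def phi_def Let_def S_def T_def)
qed

lemma sq_eq_cases: "(x::complex)^2 = y^2 \<Longrightarrow> x = y \<or> x = -y"
  by (metis power2_eq_iff)

lemma phi_fiber_a:
  assumes "phi (U,V,W) = (a,b,c)" "U + W = csqrt (Tv a b c d)" "U + W \<noteq> 0"
  shows "(U,V,W) = Rpt a b c d"
proof -
  have a: "a = U^2+V^2" and b: "b = V*(U+W)" and c: "c = V^2+W^2" using assms(1) by (auto simp: phi_def)
  have amc: "(a - c)/(U+W) = U - W" using assms(3) unfolding a c by (simp add: field_simps power2_eq_square)
  have bS: "b/(U+W) = V" using assms(3) unfolding b by simp
  show ?thesis unfolding Rpt_def Let_def assms(2)[symmetric] amc bS by (simp add: field_simps)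
qed

lemma phi_fiber:
  assumes "phi p = (a,b,c)" "b \<noteq> 0"
  shows "\<exists>d. p = Rpt a b c d \<or> p = scale3 (-1) (Rpt a b c d)"
proof -
  obtain U V W where p: "p = (U,V,W)" by (cases p) auto
  have a: "a = U^2+V^2" and b: "b = V*(U+W)" and c: "c = V^2+W^2" using assms(1) by (auto simp: phi_def p)
  define S0 where "S0 = U + W"
  have S0: "S0 \<noteq> 0" using assms(2) b by (auto simp: S0_def)
  define r where "r = csqrt (a*c - b^2)"
  have "(S0^2 - (a+c))^2 = 4*(a*c - b^2)"
    unfolding a b c S0_def by (simp add: power2_eq_square algebra_simps)
  also have "\<dots> = (2*r)^2" by (simp add: r_def power_mult_distrib)
  finally have "S0^2 - (a+c) = 2*r \<or> S0^2 - (a+c) = -(2*r)" by (rule sq_eq_cases)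
  then obtain d where "S0^2 = Tv a b c d"
  proof
    assume "S0^2 - (a+c) = 2*r"
    then have "S0^2 = Tv a b c True" by (simp add: Tv_def r_def sg_def algebra_simps)
    then show ?thesis using that by blast
  next
    assume "S0^2 - (a+c) = -(2*r)"
    then have "S0^2 = Tv a b c False" by (simp add: Tv_def r_def sg_def algebra_simps)
    then show ?thesis using that by blast
  qed
  then have "S0^2 = (csqrt (Tv a b c d))^2" by simp
  then have "S0 = csqrt (Tv a b c d) \<or> S0 = - csqrt (Tv a b c d)" by (rule sq_eq_cases)
  then show ?thesis
  proof
    assume "S0 = csqrt (Tv a b c d)"
    then have "p = Rpt a b c d" using phi_fiber_a assms(1) S0 unfolding p S0_def by blast
    then show ?thesis by blast
  next
    assume h: "S0 = - csqrt (Tv a b c d)"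
    have "phi (-U,-V,-W) = (a,b,c)" using assms(1) unfolding p by (simp add: phi_def algebra_simps)
    moreover have "-U + -W = csqrt (Tv a b c d)"
    proof -
      have "-(U+W) = csqrt (Tv a b c d)" using h by (simp add: S0_def)
      then show ?thesis by simp
    qed
    moreover have "-U + -W \<noteq> 0" using S0 by (simp add: S0_def add_eq_0_iff)
    ultimately have "(-U,-V,-W) = Rpt a b c d" by (rule phi_fiber_a)
    then have "p = scale3 (-1) (Rpt a b c d)" unfolding p by (metis (no_types) scale3_def case_prod_conv minus_minus mult_minus1)
    then show ?thesis by blast
  qed
qed

definition PR :: "pt3 \<Rightarrow> complex" where
  "PR q = (case q of (q1,q2,q3) \<Rightarrow> q1*q2*q3*(q1*q3 - q2^2)*((q1+q3+4*q2)^2 - 4*q1*q3))"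

definition lneg where "lneg L = lmul (lconst (-1)) L"
lemma lpoly_lneg[simp]: "lpoly (lneg L) p = - lpoly L p" by (simp add: lneg_def)

lemma poly3_PR: "poly3 PR"
proof -
  define S where "S = lX @ lZ @ lmul (lconst 4) lY"
  define L where "L = lmul lX (lmul lY (lmul lZ (lmul (lmul lX lZ @ lneg (lmul lY lY))
     (lmul S S @ lneg (lmul (lconst 4) (lmul lX lZ))))))"
  have "PR = lpoly L"
    by (rule ext, case_tac x) (simp add: PR_def L_def S_def power2_eq_square algebra_simps)
  then show ?thesis by (metis poly3_lpoly)
qed

lemma good_abc:
  assumes "PR (q1,q2,q3) \<noteq> 0" "a^2 = q1" "b^2 = q2" "c^2 = q3"
  shows "a \<noteq> 0" "b \<noteq> 0" "c \<noteq> 0" "(a-c)^2 + 4*b^2 \<noteq> 0" "a*c \<noteq> b^2"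
proof -
  have nz: "q1 \<noteq> 0" "q2 \<noteq> 0" "q3 \<noteq> 0" "q1*q3 - q2^2 \<noteq> 0" "(q1+q3+4*q2)^2 - 4*q1*q3 \<noteq> 0"
    using assms(1) by (auto simp: PR_def)
  show "a \<noteq> 0" "b \<noteq> 0" "c \<noteq> 0" using nz assms by auto
  show "a*c \<noteq> b^2"
  proof
    assume "a*c = b^2"
    then have "(a*c)^2 = (b^2)^2" by simp
    then have "q1*q3 = q2^2" using assms by (simp add: power_mult_distrib)
    then show False using nz by simp
  qed
  show "(a-c)^2 + 4*b^2 \<noteq> 0"
  proof
    assume h: "(a-c)^2 + 4*b^2 = 0"
    have "q1 + q3 + 4*q2 - 2*a*c = (a-c)^2 + 4*b^2"
      unfolding assms(2-4)[symmetric] by (simp add: power2_eq_square algebra_simps)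
    then have "q1 + q3 + 4*q2 = 2*a*c" using h by simp
    then have "(q1 + q3 + 4*q2)^2 = 4*a^2*c^2" by (simp add: power2_eq_square)
    then show False using nz assms by simp
  qed
qed

lemma Rpt_sum: "fst (Rpt a b c d) + snd (snd (Rpt a b c d)) = csqrt (Tv a b c d)"
  by (simp add: Rpt_def Let_def field_simps)

lemma sg_inj: "sg x * s = sg y * s \<Longrightarrow> s \<noteq> 0 \<Longrightarrow> x = y"
  by (cases x; cases y) (auto simp: sg_def)

lemma sq_sg: "(x::complex)^2 = s^2 \<Longrightarrow> \<exists>e. x = sg e * s"
  using sq_eq_cases[of x s] by (metis mult_1 mult_minus1 sg_def)

lemma card_bool3: "card (UNIV :: (bool \<times> bool \<times> bool) set) = 8"
  by (simp add: UNIV_Times_UNIV[symmetric] card_cartesian_product del: UNIV_Times_UNIV)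

lemma R_count:
  assumes "PR q \<noteq> 0"
  shows "num_preimages R_map q = 8"
proof -
  obtain q1 q2 q3 where q: "q = (q1,q2,q3)" by (cases q) auto
  have P: "PR (q1,q2,q3) \<noteq> 0" using assms q by simp
  define s1 where "s1 = csqrt q1"
  define s2 where "s2 = csqrt q2"
  define s3 where "s3 = csqrt q3"
  have sq: "s1^2 = q1" "s2^2 = q2" "s3^2 = q3" by (simp_all add: s1_def s2_def s3_def)
  have gd: "s1 \<noteq> 0" "sg e2 * s2 \<noteq> 0" "sg e3 * s3 \<noteq> 0"
    "(s1 - sg e3 * s3)^2 + 4*(sg e2 * s2)^2 \<noteq> 0" "s1 * (sg e3 * s3) \<noteq> (sg e2 * s2)^2" for e2 e3
    using good_abc[OF P sq(1), of "sg e2 * s2" "sg e3 * s3"] sq by (simp_all add: power_mult_distrib)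
  define g where "g = (\<lambda>(e2,e3,d). Rpt s1 (sg e2 * s2) (sg e3 * s3) d)"
  have phig: "phi (g (e2,e3,d)) = (s1, sg e2 * s2, sg e3 * s3)" for e2 e3 d
    unfolding g_def using phi_Rpt[OF gd(4)] by simp
  have q0: "q \<noteq> (0,0,0)" using gd(1) sq q by auto
  have "num_preimages R_map q = card (UNIV :: (bool \<times> bool \<times> bool) set)"
  proof (rule count_lemma)
    show "finite (UNIV :: (bool \<times> bool \<times> bool) set)" by simp
  next
    fix i :: "bool \<times> bool \<times> bool"
    obtain e2 e3 d where i: "i = (e2,e3,d)" by (cases i) auto
    have Rg: "R_map (g i) = q" unfolding R_phi i phig using sq q by (simp add: power_mult_distrib)
    have "g i \<noteq> (0,0,0)" using phig[of e2 e3 d] gd(2)[of e2] by (auto simp: i phi_def)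
    then show "g i \<in> {p. p \<noteq> (0, 0, 0) \<and> R_map p \<noteq> (0, 0, 0) \<and> (R_map p, q) \<in> proj_rel}"
      using Rg q0 proj_rel_refl by simp
  next
    fix i j :: "bool \<times> bool \<times> bool"
    assume "(g i, g j) \<in> proj_rel"
    then obtain k where k: "k \<noteq> 0" "g j = scale3 k (g i)" unfolding proj_rel_def by blast
    obtain e2 e3 d where i: "i = (e2,e3,d)" by (cases i) auto
    obtain e2' e3' d' where j: "j = (e2',e3',d')" by (cases j) auto
    have "phi (g j) = scale3 (k^2) (phi (g i))" using k phi_scale by simp
    then have ph: "s1 = k^2 * s1" "sg e2' * s2 = k^2 * (sg e2 * s2)" "sg e3' * s3 = k^2 * (sg e3 * s3)"
      unfolding i j phig by (simp_all add: scale3_def)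
    have k2: "k^2 = 1" using ph(1) gd(1) by (metis mult_cancel_right2 mult.commute)
    have e2: "e2' = e2" using ph(2) k2 gd(2)[of True] by (intro sg_inj[of _ s2]) auto
    have e3: "e3' = e3" using ph(3) k2 gd(3)[of True] by (intro sg_inj[of _ s3]) auto
    define a where "a = s1"
    define b where "b = sg e2 * s2"
    define c where "c = sg e3 * s3"
    have gi: "g i = Rpt a b c d" and gj: "g j = Rpt a b c d'" by (simp_all add: g_def i j a_def b_def c_def e2 e3)
    have "fst (g j) + snd (snd (g j)) = k * (fst (g i) + snd (snd (g i)))"
      using k(2) by (cases "g i") (simp add: scale3_def algebra_simps)
    then have "csqrt (Tv a b c d') = k * csqrt (Tv a b c d)" unfolding gi gj Rpt_sum .
    then have "(csqrt (Tv a b c d'))^2 = k^2 * (csqrt (Tv a b c d))^2" by (simp add: power_mult_distrib)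
    then have "Tv a b c d' = Tv a b c d" using k2 by simp
    then have "sg d' * csqrt (a*c - b^2) = sg d * csqrt (a*c - b^2)" by (simp add: Tv_def)
    moreover have "csqrt (a*c - b^2) \<noteq> 0" using gd(5)[of e3 e2] by (simp add: a_def b_def c_def)
    ultimately have "d' = d" by (rule sg_inj)
    then show "i = j" using i j e2 e3 by simp
  next
    fix p assume "p \<in> {p. p \<noteq> (0, 0, 0) \<and> R_map p \<noteq> (0, 0, 0) \<and> (R_map p, q) \<in> proj_rel}"
    then have p: "p \<noteq> (0,0,0)" "(R_map p, q) \<in> proj_rel" by auto
    then obtain \<kappa> where ka: "\<kappa> \<noteq> 0" "q = scale3 \<kappa> (R_map p)" unfolding proj_rel_def by blast
    obtain a0 b0 c0 where ph: "phi p = (a0,b0,c0)" by (cases "phi p") auto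
    have qs: "q1 = \<kappa> * a0^2" "q2 = \<kappa> * b0^2" "q3 = \<kappa> * c0^2"
      using ka(2) unfolding R_phi ph q by (simp_all add: scale3_def)
    have a0: "a0 \<noteq> 0" using qs(1) gd(1) sq(1) by auto
    define m where "m = csqrt (s1 / a0)"
    have m2: "m^2 = s1/a0" by (simp add: m_def)
    have m0: "m \<noteq> 0" using m2 gd(1) a0 by auto
    have "(m^2 * b0)^2 = s2^2"
      unfolding m2 sq(2) qs(2) using a0 sq(1) qs(1) by (simp add: field_simps power2_eq_square)
    then obtain e2 where e2: "m^2 * b0 = sg e2 * s2" using sq_sg by blast
    have "(m^2 * c0)^2 = s3^2"
      unfolding m2 sq(3) qs(3) using a0 sq(1) qs(1) by (simp add: field_simps power2_eq_square)
    then obtain e3 where e3: "m^2 * c0 = sg e3 * s3" using sq_sg by blast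
    have "phi (scale3 m p) = (s1, sg e2 * s2, sg e3 * s3)"
      unfolding phi_scale ph using e2 e3 m2 a0 by (simp add: scale3_def)
    then obtain d where d: "scale3 m p = g (e2,e3,d) \<or> scale3 m p = scale3 (-1) (g (e2,e3,d))"
      using phi_fiber gd(2)[of e2] unfolding g_def by fastforce
    then show "\<exists>i\<in>UNIV. (p, g i) \<in> proj_rel"
    proof
      assume "scale3 m p = g (e2,e3,d)"
      then have "(p, g (e2,e3,d)) \<in> proj_rel" using proj_rel_scale[OF p(1) m0] by simp
      then show ?thesis by blast
    next
      assume h: "scale3 m p = scale3 (-1) (g (e2,e3,d))"
      have "g (e2,e3,d) = scale3 (-1) (scale3 (-1) (g (e2,e3,d)))" by simp
      also have "\<dots> = scale3 (-m) p" unfolding h[symmetric] by simp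
      finally have "(p, g (e2,e3,d)) \<in> proj_rel" using proj_rel_scale[OF p(1), of "-m"] m0 by simp
      then show ?thesis by blast
    qed
  qed
  then show ?thesis using card_bool3 by simp
qed

lemma deg_R: "deg_top R_map = 8"
proof (rule deg_top_eq[OF poly3_PR])
  show "PR (0,0,0) = 0" by (simp add: PR_def)
  show "PR (1,1,2) \<noteq> 0" by (simp add: PR_def)
  show "\<forall>q. q \<noteq> (0,0,0) \<and> PR q \<noteq> 0 \<longrightarrow> num_preimages R_map q = 8" using R_count by blast
qed

lemma aff_good:
  fixes u w \<rho> :: complex
  assumes w: "w = (u - \<rho>^2)/u" and u: "u \<noteq> 0" and w0: "w \<noteq> 0"
    and n1: "1 - \<rho> \<noteq> 0" and n2: "u - \<rho> \<noteq> 0" and n3: "1 + u - 2*\<rho> \<noteq> 0"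
  defines "X \<equiv> (u - \<rho>)/(1 - \<rho>)" and "Y \<equiv> u*w/((1-\<rho>)*(u-\<rho>))"
  shows "X \<noteq> 0" "Y \<noteq> 0" "X + Y \<noteq> 0" "X*Y + 1 \<noteq> 0"
    "X*(X+Y)^2 = u*((X+Y)*(Y*X+1))" "Y*(X+1)^2 = w*((X+Y)*(Y*X+1))"
    "\<rho> = X*(Y-1)/(X*Y+1)"
proof -
  define a where "a = 1 - \<rho>"
  define b where "b = u - \<rho>"
  define M where "M = u*w"
  have a0: "a \<noteq> 0" and b0: "b \<noteq> 0" using n1 n2 by (simp_all add: a_def b_def)
  have ab: "a + b \<noteq> 0" using n3 by (simp add: a_def b_def algebra_simps)
  have r: "\<rho> = 1 - a" and uu: "u = b + 1 - a" by (simp_all add: a_def b_def)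
  have uw0: "M = u - \<rho>^2" using u unfolding w M_def by simp
  have Mab: "M = a + b - a^2" unfolding uw0 unfolding r uu by (simp add: power2_eq_square algebra_simps)
  have M0: "M \<noteq> 0" using u w0 by (simp add: M_def)
  have Xd: "X = b/a" by (simp add: X_def a_def b_def)
  have Yd: "Y = M/(a*b)" unfolding Y_def M_def by (simp add: a_def b_def)
  have XY: "X + Y = u*(a+b)/(a*b)"
  proof -
    have "X + Y = (b^2 + M)/(a*b)" unfolding Xd Yd using a0 b0 by (simp add: field_simps power2_eq_square)
    also have "b^2 + M = u*(a+b)" unfolding Mab uu by (simp add: algebra_simps power2_eq_square)
    finally show ?thesis .
  qed
  have XY1: "X*Y + 1 = (a+b)/a^2"
  proof -
    have "X*Y + 1 = (M + a^2)/a^2" unfolding Xd Yd using a0 b0 by (simp add: field_simps power2_eq_square)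
    also have "M + a^2 = a + b" unfolding Mab by simp
    finally show ?thesis .
  qed
  have X1: "X + 1 = (a+b)/a" unfolding Xd using a0 by (simp add: field_simps)
  show "X \<noteq> 0" unfolding Xd using a0 b0 by simp
  show "Y \<noteq> 0" unfolding Yd using a0 b0 M0 by simp
  show "X + Y \<noteq> 0" unfolding XY using a0 b0 ab u by simp
  show "X*Y + 1 \<noteq> 0" unfolding XY1 using a0 ab by simp
  show "X*(X+Y)^2 = u*((X+Y)*(Y*X+1))"
  proof -
    have "X*(X+Y) = u*(Y*X+1)" unfolding XY mult.commute[of Y X] XY1 unfolding Xd
      using a0 b0 by (simp add: field_simps power2_eq_square)
    then have "(X+Y)*(X*(X+Y)) = (X+Y)*(u*(Y*X+1))" by simp
    then show ?thesis by (simp add: power2_eq_square algebra_simps)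
  qed
  show "Y*(X+1)^2 = w*((X+Y)*(Y*X+1))"
    unfolding X1 XY mult.commute[of Y X] XY1 unfolding Yd M_def
    using a0 b0 by (simp add: field_simps power2_eq_square)
  show "\<rho> = X*(Y-1)/(X*Y+1)"
  proof -
    have "X*(Y-1) = (M - a*b)/a^2"
      unfolding Xd Yd using a0 b0 by (simp add: field_simps power2_eq_square)
    also have "M - a*b = (a+b)*(1-a)" unfolding Mab by (simp add: algebra_simps power2_eq_square)
    finally show ?thesis unfolding XY1 r using a0 ab by simp
  qed
qed

lemma aux_cancel: "(D::complex) \<noteq> 0 \<Longrightarrow> 1 + x \<noteq> 0 \<Longrightarrow> x = (x*(x+1)/D)/((1+x)/D)"
proof -
  assume D: "D \<noteq> 0" and x: "1 + x \<noteq> 0"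
  have c: "(1+x)/D \<noteq> 0" using D x by simp
  have eq: "x*(x+1)/D = x*((1+x)/D)" by (simp add: algebra_simps)
  show ?thesis unfolding eq using c by simp
qed

lemma aux_y: "(D::complex) \<noteq> 0 \<Longrightarrow> E \<noteq> 0 \<Longrightarrow> x \<noteq> 0 \<Longrightarrow> 1 + x \<noteq> 0 \<Longrightarrow>
   y = (x*E/D * (y*(x+1)^2/(E*D)))/(((1+x)/D)*(x*(x+1)/D))"
proof -
  assume D: "D \<noteq> 0" and E: "E \<noteq> 0" and x: "x \<noteq> 0" and x1: "1 + x \<noteq> 0"
  have x1': "x + 1 \<noteq> 0" using x1 by (metis add.commute)
  have K: "((1+x)/D)*(x*(x+1)/D) \<noteq> 0" using D x x1 x1' by simp
  have eq: "x*E/D * (y*(x+1)^2/(E*D)) = y * (((1+x)/D)*(x*(x+1)/D))"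
    using D E by (simp add: field_simps power2_eq_square)
  show ?thesis unfolding eq using K by simp
qed

lemma aux_rho:
  fixes x y D E :: complex
  assumes D: "D \<noteq> 0" and E: "E \<noteq> 0" and rel: "E*D - y*(x+1)^2 = x*(y-1)^2"
  shows "(x*(y-1)/D)^2 = x*E/D*(1 - y*(x+1)^2/(E*D))"
proof -
  have h0: "1 - y*(x+1)^2/(E*D) = (E*D - y*(x+1)^2)/(E*D)" using D E by (simp add: diff_divide_distrib)
  have h: "1 - y*(x+1)^2/(E*D) = x*(y-1)^2/(E*D)" unfolding h0 rel ..
  show ?thesis unfolding h using D E by (simp add: field_simps power2_eq_square)
qed

lemma aff_inv:
  fixes x y u w :: complex
  assumes s0: "x + y \<noteq> 0" and s1: "x*y + 1 \<noteq> 0"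
    and e1: "x*(x+y)^2 = u*((x+y)*(y*x+1))" and e2: "y*(x+1)^2 = w*((x+y)*(y*x+1))"
    and u: "u \<noteq> 0" and w0: "w \<noteq> 0"
  defines "\<rho> \<equiv> x*(y-1)/(x*y+1)"
  shows "\<rho>^2 = u*(1-w)" "1 - \<rho> \<noteq> 0" "u - \<rho> \<noteq> 0" "x = (u - \<rho>)/(1 - \<rho>)" "y = u*w/((1-\<rho>)*(u-\<rho>))"
proof -
  have s1': "y*x + 1 \<noteq> 0" using s1 by (simp add: mult.commute)
  have "(x+y)*(x*(x+y)) = (x+y)*(u*(y*x+1))" using e1 by (simp add: power2_eq_square algebra_simps)
  then have "x*(x+y) = u*(y*x+1)" using s0 by simp
  then have U: "u = x*(x+y)/(x*y+1)" using s1' by (simp add: field_simps mult.commute)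
  have "y*(x+1)^2/((x+y)*(y*x+1)) = w" unfolding e2 using s0 s1' by simp
  then have W: "w = y*(x+1)^2/((x+y)*(x*y+1))" by (simp add: mult.commute)
  have x0: "x \<noteq> 0" using u U by auto
  have x1: "x + 1 \<noteq> 0" using w0 W by auto
  have r1: "1 - \<rho> = (1+x)/(x*y+1)" unfolding \<rho>_def using s1 by (simp add: field_simps)
  have r2: "u - \<rho> = x*(x+1)/(x*y+1)"
  proof -
    have "u - \<rho> = (x*(x+y) - x*(y-1))/(x*y+1)" unfolding \<rho>_def U by (rule diff_divide_distrib[symmetric])
    also have "x*(x+y) - x*(y-1) = x*(x+1)" by (simp add: algebra_simps)
    finally show ?thesis .
  qed
  show "\<rho>^2 = u*(1-w)" unfolding \<rho>_def U W
    by (rule aux_rho[OF s1 s0]) (simp add: algebra_simps power2_eq_square)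
  show "1 - \<rho> \<noteq> 0" unfolding r1 using x1 s1 by (simp add: add.commute)
  show "u - \<rho> \<noteq> 0" unfolding r2 using x0 x1 s1 by simp
  show "x = (u - \<rho>)/(1 - \<rho>)" unfolding r1 r2 using x1 s1 by (intro aux_cancel) (simp_all add: add.commute)
  show "y = u*w/((1-\<rho>)*(u-\<rho>))" unfolding r1 r2 unfolding U W
    by (rule aux_y[OF s1 s0 x0]) (metis add.commute x1)
qed

lemma calR_aff: "calR_map (z,t,1) = (z^2*(z^2+t^2)^2, t^2*(z^2+1)^2, (z^2+t^2)*(t^2*z^2+1))"
  by (simp add: calR_map_def)

lemma calR_scale: "calR_map (scale3 k p) = scale3 (k^6) (calR_map p)"
  by (cases p) (simp add: calR_map_def scale3_def power_mult_distrib algebra_simps power2_eq_square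
        eval_nat_numeral)

lemma calR_Y0: "calR_map (Z,T,0) = (F1,F2,F3) \<Longrightarrow> F1*F3 - F1*F2 - F3^2 = 0"
  by (simp add: calR_map_def) (auto simp: algebra_simps power2_eq_square eval_nat_numeral)

definition PC :: "pt3 \<Rightarrow> complex" where
  "PC q = (case q of (q1,q2,q3) \<Rightarrow> q1*q2*q3*(q3-q2)*(q1*(q3-q2) - q3^2)*(q1+q2-q3)*((q1+q3)^2 - 4*q1*(q3-q2)))"

lemma poly3_PC: "poly3 PC"
proof -
  define D where "D = lZ @ lneg lY"
  define L where "L = lmul lX (lmul lY (lmul lZ (lmul D (lmul (lmul lX D @ lneg (lmul lZ lZ))
     (lmul (lX @ lY @ lneg lZ) (lmul (lX @ lZ) (lX @ lZ) @ lneg (lmul (lconst 4) (lmul lX D))))))))"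
  have "PC = lpoly L"
    by (rule ext, case_tac x) (simp add: PC_def L_def D_def power2_eq_square algebra_simps)
  then show ?thesis by (metis poly3_lpoly)
qed

lemma good_uw:
  assumes P: "PC (q1,q2,q3) \<noteq> 0" and u: "u = q1/q3" and w: "w = q2/q3" and r: "\<rho>^2 = u*(1-w)"
  shows "u \<noteq> 0" "w \<noteq> 0" "\<rho> \<noteq> 0" "1 - \<rho> \<noteq> 0" "u - \<rho> \<noteq> 0" "1 + u - 2*\<rho> \<noteq> 0"
    "w = (u - \<rho>^2)/u"
proof -
  have nz: "q1 \<noteq> 0" "q2 \<noteq> 0" "q3 \<noteq> 0" "q3 - q2 \<noteq> 0" "q1*(q3-q2) - q3^2 \<noteq> 0" "q1+q2-q3 \<noteq> 0"
    "(q1+q3)^2 - 4*q1*(q3-q2) \<noteq> 0"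
    using P by (auto simp: PC_def)
  have r': "\<rho>^2 = q1*(q3-q2)/q3^2" unfolding r u w using nz by (simp add: field_simps power2_eq_square)
  show u0: "u \<noteq> 0" "w \<noteq> 0" unfolding u w using nz by auto
  show "\<rho> \<noteq> 0" using r' nz by auto
  show "1 - \<rho> \<noteq> 0"
  proof
    assume "1 - \<rho> = 0"
    then have "\<rho>^2 = 1" by simp
    then have "q1*(q3-q2) = q3^2" using r' nz by (simp add: field_simps)
    then show False using nz by simp
  qed
  show "u - \<rho> \<noteq> 0"
  proof
    assume "u - \<rho> = 0"
    then have "\<rho>^2 = u^2" by simp
    then have "q1*(q3-q2)/q3^2 = (q1/q3)^2" using r' u by simp
    then have "q1*(q3-q2) = q1^2" using nz by (simp add: field_simps power2_eq_square)
    then have "q3 - q2 = q1" using nz by (simp add: power2_eq_square)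
    then show False using nz by (simp add: algebra_simps)
  qed
  show "1 + u - 2*\<rho> \<noteq> 0"
  proof
    assume "1 + u - 2*\<rho> = 0"
    then have "(1+u)^2 = 4*\<rho>^2" by (simp add: algebra_simps power2_eq_square)
    then have "(1 + q1/q3)^2 = 4*(q1*(q3-q2)/q3^2)" using r' u by simp
    then have "(q1+q3)^2 = 4*q1*(q3-q2)" using nz by (simp add: field_simps power2_eq_square)
    then show False using nz by simp
  qed
  show "w = (u - \<rho>^2)/u" using u0 r by (simp add: field_simps)
qed

lemma sq_csqrt_sg: "(z::complex)^2 = X \<Longrightarrow> \<exists>e. z = sg e * csqrt X"
  using sq_sg[of z "csqrt X"] by simp

lemma sg_csqrt_sq[simp]: "(sg e * csqrt X)^2 = X"
  by (simp add: power_mult_distrib)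

lemma calR_count:
  assumes "PC q \<noteq> 0"
  shows "num_preimages calR_map q = 8"
proof -
  obtain q1 q2 q3 where q: "q = (q1,q2,q3)" by (cases q) auto
  have P: "PC (q1,q2,q3) \<noteq> 0" using assms q by simp
  have q3: "q3 \<noteq> 0" using P by (auto simp: PC_def)
  define u where "u = q1/q3"
  define w where "w = q2/q3"
  define r where "r = csqrt (u*(1-w))"
  define \<rho> where "\<rho> d = sg d * r" for d
  have r2: "(\<rho> d)^2 = u*(1-w)" for d by (simp add: \<rho>_def r_def power_mult_distrib)
  note gd = good_uw[OF P u_def w_def r2]
  define Xf where "Xf d = (u - \<rho> d)/(1 - \<rho> d)" for d
  define Yf where "Yf d = u*w/((1 - \<rho> d)*(u - \<rho> d))" for d
  note ag = aff_good[OF gd(7) gd(1) gd(2) gd(4) gd(5) gd(6), folded Xf_def Yf_def]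
  define g where "g = (\<lambda>(d,e1,e2). (sg e1 * csqrt (Xf d), sg e2 * csqrt (Yf d), (1::complex)))"
  have Fg: "calR_map (g (d,e1,e2)) = (Xf d*(Xf d+Yf d)^2, Yf d*(Xf d+1)^2, (Xf d+Yf d)*(Yf d*Xf d+1))"
    for d e1 e2 unfolding g_def by (simp add: calR_aff)
  have q0: "q \<noteq> (0,0,0)" using q q3 by simp
  have "num_preimages calR_map q = card (UNIV :: (bool \<times> bool \<times> bool) set)"
  proof (rule count_lemma)
    show "finite (UNIV :: (bool \<times> bool \<times> bool) set)" by simp
  next
    fix i :: "bool \<times> bool \<times> bool"
    obtain d e1 e2 where i: "i = (d,e1,e2)" by (cases i) auto
    define F3 where "F3 = (Xf d+Yf d)*(Yf d*Xf d+1)"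
    have F30: "F3 \<noteq> 0" unfolding F3_def using ag(3,4)[of d] by (simp add: mult.commute)
    have Fg': "calR_map (g i) = (u*F3, w*F3, F3)" unfolding i Fg F3_def using ag(5,6)[of d] by simp
    have "q = scale3 (q3/F3) (calR_map (g i))"
      unfolding Fg' q using F30 q3 by (simp add: scale3_def u_def w_def)
    moreover have Fn: "calR_map (g i) \<noteq> (0,0,0)" using Fg' F30 by simp
    ultimately have "(calR_map (g i), q) \<in> proj_rel" using proj_rel_scale[OF Fn, of "q3/F3"] F30 q3 by simp
    moreover have "g i \<noteq> (0,0,0)" by (simp add: g_def i)
    ultimately show "g i \<in> {p. p \<noteq> (0, 0, 0) \<and> calR_map p \<noteq> (0, 0, 0) \<and> (calR_map p, q) \<in> proj_rel}"
      using Fn by simp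
  next
    fix i j :: "bool \<times> bool \<times> bool"
    assume "(g i, g j) \<in> proj_rel"
    then obtain k where k: "k \<noteq> 0" "g j = scale3 k (g i)" unfolding proj_rel_def by blast
    obtain d e1 e2 where i: "i = (d,e1,e2)" by (cases i) auto
    obtain d' e1' e2' where j: "j = (d',e1',e2')" by (cases j) auto
    have k1: "k = 1" using k(2) by (simp add: g_def i j scale3_def)
    then have eq: "sg e1' * csqrt (Xf d') = sg e1 * csqrt (Xf d)" "sg e2' * csqrt (Yf d') = sg e2 * csqrt (Yf d)"
      using k(2) by (simp_all add: g_def i j)
    have X: "Xf d' = Xf d" using arg_cong[OF eq(1), of "\<lambda>x. x^2"] by simp
    have Y: "Yf d' = Yf d" using arg_cong[OF eq(2), of "\<lambda>x. x^2"] by simp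
    have "\<rho> d' = \<rho> d" using ag(7)[of d] ag(7)[of d'] X Y by simp
    moreover have "r \<noteq> 0" using gd(3)[of True] by (simp add: \<rho>_def)
    ultimately have dd: "d' = d" unfolding \<rho>_def using sg_inj by (metis mult.commute)
    have cX: "csqrt (Xf d) \<noteq> 0" using ag(1)[of d] by simp
    have cY: "csqrt (Yf d) \<noteq> 0" using ag(2)[of d] by simp
    have "e1' = e1" using eq(1) cX unfolding dd by (rule sg_inj)
    moreover have "e2' = e2" using eq(2) cY unfolding dd by (rule sg_inj)
    ultimately show "i = j" using i j dd by simp
  next
    fix p assume "p \<in> {p. p \<noteq> (0, 0, 0) \<and> calR_map p \<noteq> (0, 0, 0) \<and> (calR_map p, q) \<in> proj_rel}"
    then have p: "p \<noteq> (0,0,0)" "(calR_map p, q) \<in> proj_rel" by auto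
    then obtain \<kappa> where ka: "\<kappa> \<noteq> 0" "q = scale3 \<kappa> (calR_map p)" unfolding proj_rel_def by blast
    obtain Z T Y0 where pz: "p = (Z,T,Y0)" by (cases p) auto
    have Y0: "Y0 \<noteq> 0"
    proof
      assume Y00: "Y0 = 0"
      obtain F1 F2 F3 where F: "calR_map p = (F1,F2,F3)" by (cases "calR_map p") auto
      have "F1*F3 - F1*F2 - F3^2 = 0" using calR_Y0 F unfolding pz Y00 by blast
      have qF: "q1 = \<kappa>*F1" "q2 = \<kappa>*F2" "q3 = \<kappa>*F3" using ka(2) F q by (simp_all add: scale3_def)
      from qF have "q1*(q3-q2) - q3^2 = \<kappa>^2 * (F1*F3 - F1*F2 - F3^2)"
        by (simp add: algebra_simps power2_eq_square)
      then have "q1*(q3-q2) - q3^2 = 0" using \<open>F1*F3 - F1*F2 - F3^2 = 0\<close> by simp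
      then show False using P by (simp add: PC_def)
    qed
    define z where "z = Z/Y0"
    define t where "t = T/Y0"
    have p': "scale3 (1/Y0) p = (z,t,1)" using Y0 by (simp add: pz scale3_def z_def t_def)
    define x where "x = z^2"
    define y where "y = t^2"
    have "q = scale3 (\<kappa> * Y0^6) (calR_map (scale3 (1/Y0) p))"
      unfolding calR_scale ka(2) using Y0 by (simp add: power_one_over)
    then have qq: "q1 = \<kappa>*Y0^6 * (x*(x+y)^2)" "q2 = \<kappa>*Y0^6 * (y*(x+1)^2)" "q3 = \<kappa>*Y0^6 * ((x+y)*(y*x+1))"
      unfolding p' calR_aff q by (simp_all add: scale3_def x_def y_def)
    define K where "K = \<kappa>*Y0^6"
    have K0: "K \<noteq> 0" using ka(1) Y0 by (simp add: K_def)
    have s0: "x + y \<noteq> 0" and s1': "y*x + 1 \<noteq> 0" using qq(3) q3 by auto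
    have s1: "x*y + 1 \<noteq> 0" using s1' by (simp add: mult.commute)
    have e1: "x*(x+y)^2 = u*((x+y)*(y*x+1))"
      unfolding u_def using qq(1,3) K0 q3 by (simp add: K_def[symmetric] field_simps)
    have e2: "y*(x+1)^2 = w*((x+y)*(y*x+1))"
      unfolding w_def using qq(2,3) K0 q3 by (simp add: K_def[symmetric] field_simps)
    note ai = aff_inv[OF s0 s1 e1 e2 gd(1) gd(2)]
    define \<rho>0 where "\<rho>0 = x*(y-1)/(x*y+1)"
    have "\<rho>0^2 = r^2" using ai(1) by (simp add: \<rho>0_def r_def)
    then obtain d where d: "\<rho>0 = \<rho> d" using sq_sg unfolding \<rho>_def by blast
    have xX: "x = Xf d" using ai(4) unfolding Xf_def d[symmetric] \<rho>0_def .
    have yY: "y = Yf d" using ai(5) unfolding Yf_def d[symmetric] \<rho>0_def .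
    obtain e1 where z1: "z = sg e1 * csqrt (Xf d)" using sq_csqrt_sg[of z] xX x_def by metis
    obtain e2 where t1: "t = sg e2 * csqrt (Yf d)" using sq_csqrt_sg[of t] yY y_def by metis
    have "g (d,e1,e2) = scale3 (1/Y0) p" unfolding p' g_def using z1 t1 by simp
    then have "(p, g (d,e1,e2)) \<in> proj_rel" using proj_rel_scale[OF p(1), of "1/Y0"] Y0 by simp
    then show "\<exists>i\<in>UNIV. (p, g i) \<in> proj_rel" by blast
  qed
  then show ?thesis using card_bool3 by simp
qed

lemma deg_calR: "deg_top calR_map = 8"
proof (rule deg_top_eq[OF poly3_PC])
  show "PC (0,0,0) = 0" by (simp add: PC_def)
  show "PC (1,1,3) \<noteq> 0" by (simp add: PC_def)
  show "\<forall>q. q \<noteq> (0,0,0) \<and> PC q \<noteq> 0 \<longrightarrow> num_preimages calR_map q = 8" using calR_count by blast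
qed

theorem proposition4p3:
  shows "deg_top R_map = 8 \<and> deg_top calR_map = 8"
  using deg_R deg_calR by simp

end
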